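(* Let $N$ be the six-dimensional connected, simply connected nilpotent Lie group with Lie algebra $\mathfrak n$ described in the context, and consider the co-adjoint action of $N$ on $\mathfrak n^*$, $\ell\mapsto \ell\circ \mathrm{Ad}(n^{-1})$. Each co-adjoint orbit of $N$ contains exactly one element $\ell=(\omega,\lambda)$, $\lambda=(\lambda_1,\lambda_2)$, satisfying one of the following: (i) $\lambda_2\neq 0$ and $\omega=0$; (ii) $\lambda_2=0$, $\lambda_1\neq 0$ and $\omega\in \mathbb R X_2\oplus\mathbb R Y_2$; (iii) $\lambda_1=\lambda_2=0$ and $\omega\in\mathfrak v$ arbitrary.
   Context: $\mathfrak n$ is the real Lie algebra with basis $X_1,Y_1,X_2,Y_2,T_1,T_2$ whose only nonzero brackets (up to skew-symmetry) are $[X_1,Y_1]=T_1$, $[X_1,X_2]=T_2$, $[Y_1,Y_2]=T_2$. Write $\mathfrak v=\mathbb R X_1\oplus\mathbb R Y_1\oplus\mathbb R X_2\oplus\mathbb R Y_2$ and $\mathfrak z=\mathbb R T_1\oplus\mathbb R T_2$ (the centre), each with the scalar product making the given basis orthonormal. Every $\ell\in\mathfrak n^*$ is written $\ell=(\omega,\lambda)$ where $\omega$ and $\lambda$ are the restrictions of $\ell$ to $\mathfrak v$ and $\mathfrak z$, identified with vectors $\omega\in\mathfrak v$ and $\lambda=\lambda_1T_1+\lambda_2T_2\in\mathfrak z$ via these scalar products. *)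

theory Defs
  imports "HOL-Analysis.Analysis"
begin

text \<open>The Lie algebra n = v (+) z.  An element of v is written
  (x1, y1, x2, y2) meaning x1 X1 + y1 Y1 + x2 X2 + y2 Y2, an element of z is
  (t1, t2) meaning t1 T1 + t2 T2.  The standard inner product on these product
  types makes the given bases orthonormal.\<close>

type_synonym vv = "real \<times> real \<times> real \<times> real"
type_synonym zz = "real \<times> real"
type_synonym nn = "vv \<times> zz"

text \<open>Bracket on v with values in z:
  [X1,Y1] = T1, [X1,X2] = T2, [Y1,Y2] = T2, all other basis brackets zero.\<close>
fun vbr :: "vv \<Rightarrow> vv \<Rightarrow> zz" where
  "vbr (a1, b1, a2, b2) (c1, d1, c2, d2) =
     (a1 * d1 - b1 * c1, (a1 * c2 - a2 * c1) + (b1 * d2 - b2 * d1))"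

definition lie_br :: "nn \<Rightarrow> nn \<Rightarrow> nn" where
  "lie_br U W = (0, vbr (fst U) (fst W))"

text \<open>The connected, simply connected group N, realised on the underlying
  space of n via the exponential map (a global diffeomorphism); the group law
  is the Baker-Campbell-Hausdorff product, which for this 2-step nilpotent
  algebra is exactly U * W = U + W + 1/2 [U,W].\<close>
definition nmul :: "nn \<Rightarrow> nn \<Rightarrow> nn" where
  "nmul U W = U + W + (1/2) *\<^sub>R lie_br U W"

definition ninv :: "nn \<Rightarrow> nn" where
  "ninv U = - U"

text \<open>Adjoint representation: differential at the identity (= 0) of
  conjugation by g, transported to n via exp (whose differential at 0 is id).\<close>
definition Ad :: "nn \<Rightarrow> nn \<Rightarrow> nn" where
  "Ad g = frechet_derivative (\<lambda>Y. nmul (nmul g Y) (ninv g)) (at 0)"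

text \<open>A functional l in n* is identified with a vector (omega, lambda) in n via
  the scalar product: l(Y) = (omega, lambda) \<bullet> Y.  Co-adjoint orbit of l:
  all l o Ad(g^{-1}), g in N.\<close>
definition coadj_orbit :: "nn \<Rightarrow> nn set" where
  "coadj_orbit l = {l'. \<exists>g. \<forall>Y. l' \<bullet> Y = l \<bullet> Ad (ninv g) Y}"

end

theory Submission
  imports Defs
begin

lemma split6: obtains a1 b1 a2 b2 s1 s2 where "(g::nn) = ((a1,b1,a2,b2),(s1,s2))"
  by (cases g) auto

lemma conj_eq: "nmul (nmul g Y) (ninv g) = Y + lie_br g Y"
proof -
  obtain a1 b1 a2 b2 s1 s2 where g: "g = ((a1,b1,a2,b2),(s1,s2))" by (rule split6)
  obtain c1 d1 c2 d2 u1 u2 where Y: "Y = ((c1,d1,c2,d2),(u1,u2))" by (rule split6)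
  show ?thesis unfolding g Y by (simp add: nmul_def ninv_def lie_br_def algebra_simps)
qed

lemma lin: "linear (\<lambda>Y. Y + lie_br g Y)"
proof (rule linearI)
  obtain a1 b1 a2 b2 s1 s2 where g: "g = ((a1,b1,a2,b2),(s1,s2))" by (rule split6)
  fix x y :: nn and c :: real
  obtain c1 d1 c2 d2 u1 u2 where x: "x = ((c1,d1,c2,d2),(u1,u2))" by (rule split6)
  obtain e1 f1 e2 f2 v1 v2 where y: "y = ((e1,f1,e2,f2),(v1,v2))" by (rule split6)
  show "x + y + lie_br g (x + y) = x + lie_br g x + (y + lie_br g y)"
    unfolding g x y by (simp add: lie_br_def algebra_simps)
  show "c *\<^sub>R x + lie_br g (c *\<^sub>R x) = c *\<^sub>R (x + lie_br g x)"
    unfolding g x by (simp add: lie_br_def algebra_simps)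
qed

lemma Ad_eq: "Ad g Y = Y + lie_br g Y"
proof -
  have bl: "bounded_linear (\<lambda>Y. Y + lie_br g Y)"
    using lin linear_conv_bounded_linear by blast
  have "((\<lambda>Y. nmul (nmul g Y) (ninv g)) has_derivative (\<lambda>Y. Y + lie_br g Y)) (at 0)"
    unfolding conj_eq by (rule bounded_linear_imp_has_derivative[OF bl])
  then have "(\<lambda>Y. Y + lie_br g Y) = Ad g" unfolding Ad_def by (rule frechet_derivative_at)
  then show ?thesis by (rule fun_cong[symmetric, where x = Y, THEN sym, THEN sym])
qed

definition F :: "nn \<Rightarrow> nn \<Rightarrow> nn" where
  "F l g = (case l of ((x1, y1, x2, y2), (t1, t2)) \<Rightarrow>
     (case g of ((a1, b1, a2, b2), _) \<Rightarrow>
       ((x1 + t1 * b1 + t2 * a2, y1 - t1 * a1 + t2 * b2, x2 - t2 * a1, y2 - t2 * b1), (t1, t2))))"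

lemma key: "l \<bullet> Ad (ninv g) Y = F l g \<bullet> Y"
proof -
  obtain a1 b1 a2 b2 s1 s2 where g: "g = ((a1,b1,a2,b2),(s1,s2))" by (rule split6)
  obtain c1 d1 c2 d2 u1 u2 where Y: "Y = ((c1,d1,c2,d2),(u1,u2))" by (rule split6)
  obtain x1 y1 x2 y2 t1 t2 where l: "l = ((x1,y1,x2,y2),(t1,t2))" by (rule split6)
  show ?thesis unfolding Ad_eq g Y l
    by (simp add: F_def lie_br_def ninv_def algebra_simps)
qed

lemma orbit: "coadj_orbit l = range (F l)"
proof -
  have *: "l' \<in> coadj_orbit l \<longleftrightarrow> (\<exists>g. l' = F l g)" for l'
  proof -
    have "(\<forall>Y. l' \<bullet> Y = F l g \<bullet> Y) \<longleftrightarrow> l' = F l g" for g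
    proof
      assume A: "\<forall>Y. l' \<bullet> Y = F l g \<bullet> Y"
      have "l' \<bullet> (l' - F l g) = F l g \<bullet> (l' - F l g)" using A by blast
      then have "(l' - F l g) \<bullet> (l' - F l g) = 0" by (simp only: inner_diff_left)
      then show "l' = F l g" by simp
    qed simp
    then show ?thesis unfolding coadj_orbit_def key by auto
  qed
  show ?thesis
  proof (rule set_eqI)
    fix x show "x \<in> coadj_orbit l \<longleftrightarrow> x \<in> range (F l)" using *[of x] by blast
  qed
qed

theorem lemma3p1:
  fixes l :: nn
  shows "\<exists>!l0. l0 \<in> coadj_orbit l \<and>
    (case l0 of ((x1, y1, x2, y2), (lam1, lam2)) \<Rightarrow>
        (lam2 \<noteq> 0 \<and> (x1, y1, x2, y2) = (0, 0, 0, 0))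
      \<or> (lam2 = 0 \<and> lam1 \<noteq> 0 \<and> x1 = 0 \<and> y1 = 0)
      \<or> (lam1 = 0 \<and> lam2 = 0))"
proof -
  obtain x1 y1 x2 y2 t1 t2 where l: "l = ((x1, y1, x2, y2), (t1, t2))"
    by (rule split6)
  let ?P = "\<lambda>l0. l0 \<in> coadj_orbit l \<and>
    (case l0 of ((x1, y1, x2, y2), (lam1, lam2)) \<Rightarrow>
        (lam2 \<noteq> 0 \<and> (x1, y1, x2, y2) = (0, 0, 0, 0))
      \<or> (lam2 = 0 \<and> lam1 \<noteq> 0 \<and> x1 = 0 \<and> y1 = 0)
      \<or> (lam1 = 0 \<and> lam2 = 0))"
  have mem: "l0 \<in> coadj_orbit l \<longleftrightarrow> (\<exists>a1 b1 a2 b2. l0 =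
     ((x1 + t1 * b1 + t2 * a2, y1 - t1 * a1 + t2 * b2, x2 - t2 * a1, y2 - t2 * b1), (t1, t2)))" for l0
  proof
    assume "l0 \<in> coadj_orbit l"
    then obtain g where g0: "l0 = F l g" unfolding orbit by blast
    obtain a1 b1 a2 b2 s1 s2 where g: "g = ((a1,b1,a2,b2),(s1,s2))" by (rule split6)
    show "\<exists>a1 b1 a2 b2. l0 =
     ((x1 + t1 * b1 + t2 * a2, y1 - t1 * a1 + t2 * b2, x2 - t2 * a1, y2 - t2 * b1), (t1, t2))"
    proof -
      have "l0 = ((x1 + t1 * b1 + t2 * a2, y1 - t1 * a1 + t2 * b2, x2 - t2 * a1, y2 - t2 * b1), (t1, t2))"
        using g0 unfolding g l F_def by simp
      then show ?thesis by blast
    qed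
  next
    assume "\<exists>a1 b1 a2 b2. l0 =
     ((x1 + t1 * b1 + t2 * a2, y1 - t1 * a1 + t2 * b2, x2 - t2 * a1, y2 - t2 * b1), (t1, t2))"
    then obtain a1 b1 a2 b2 where e: "l0 =
     ((x1 + t1 * b1 + t2 * a2, y1 - t1 * a1 + t2 * b2, x2 - t2 * a1, y2 - t2 * b1), (t1, t2))" by blast
    have "l0 = F l ((a1,b1,a2,b2),(0,0))" unfolding e l F_def by simp
    then show "l0 \<in> coadj_orbit l" unfolding orbit by blast
  qed
  define w where "w = (if t2 \<noteq> 0 then ((0,0,0,0),(t1,t2)) :: nn
     else if t1 \<noteq> 0 then ((0,0,x2,y2),(t1,0)) else l)"
  have Pw: "?P w"
  proof (cases "t2 = 0")
    case False
    define a1 where "a1 = x2 / t2"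
    define b1 where "b1 = y2 / t2"
    define a2 where "a2 = - (x1 + t1 * b1) / t2"
    define b2 where "b2 = - (y1 - t1 * a1) / t2"
    have "w = ((x1 + t1 * b1 + t2 * a2, y1 - t1 * a1 + t2 * b2, x2 - t2 * a1, y2 - t2 * b1), (t1, t2))"
      using False unfolding w_def a1_def b1_def a2_def b2_def by (simp add: field_simps)
    then have "w \<in> coadj_orbit l" unfolding mem by blast
    then show ?thesis using False by (simp add: w_def)
  next
    case True
    show ?thesis
    proof (cases "t1 = 0")
      case False
      define a1 where "a1 = y1 / t1"
      define b1 where "b1 = - x1 / t1"
      have "w = ((x1 + t1 * b1 + t2 * 0, y1 - t1 * a1 + t2 * 0, x2 - t2 * a1, y2 - t2 * b1), (t1, t2))"
        using False True unfolding w_def a1_def b1_def by (simp add: field_simps)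
      then have "w \<in> coadj_orbit l" unfolding mem by blast
      then show ?thesis using False True by (simp add: w_def)
    next
      case t1: True
      have "w = ((x1 + t1 * 0 + t2 * 0, y1 - t1 * 0 + t2 * 0, x2 - t2 * 0, y2 - t2 * 0), (t1, t2))"
        using t1 True unfolding w_def l by simp
      then have "w \<in> coadj_orbit l" unfolding mem by blast
      then show ?thesis using t1 True by (simp add: w_def l)
    qed
  qed
  have uniq: "l0 = w" if "?P l0" for l0
  proof -
    from that obtain a1 b1 a2 b2 where l0: "l0 =
     ((x1 + t1 * b1 + t2 * a2, y1 - t1 * a1 + t2 * b2, x2 - t2 * a1, y2 - t2 * b1), (t1, t2))"
      unfolding mem by blast
    show ?thesis using that unfolding l0 w_def l
      by (cases "t2 = 0"; cases "t1 = 0") simp_all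
  qed
  show ?thesis using Pw uniq by blast
qed

end
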